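(* Let $m\ge1$ and let $\phi\in C^\infty(\mathbb R^2)$ satisfy, for some $C>0$ and all $z\in\mathbb R^2$, $|D^3\phi(z)|\le C|z|^{2m-1}$, $|D^2\phi(z)|\le C|z|^{2m}$, $|D\phi(z)|\le C|z|^{2m+1}$. There exist constants $C_2>1$ and $\varepsilon_0,\varepsilon_2\in(0,1)$ such that for every $z\ne0$ there is a unit vector $u\in\mathbb S^1\subset\mathbb R^2$ such that for every $r\in(0,\varepsilon_0|z|)$ one has $B_{\mathrm{Eucl}}(z+\tfrac r2u,\varepsilon_2 r)\subset B_{\mathrm{Eucl}}(z,r)$ and $$|M(\zeta-z)|\ge C_2^{-1}|z|^{2m}r$$ for every $\zeta\in B_{\mathrm{Eucl}}(z+\tfrac r2u,\varepsilon_2r)$ and every matrix $M$ of the form $$M=\begin{bmatrix}\phi_{xx}(z')-2m|z|^{2m-2}xy & \phi_{xy}(z')-|z|^{2m-2}(|z|^2+2my^2)\\ \phi_{xy}(z'')+|z|^{2m-2}(|z|^2+2mx^2) & \phi_{yy}(z'')+2m|z|^{2m-2}xy\end{bmatrix},\qquad z=(x,y),$$ with $z',z''$ arbitrary points of the segment $[z,\zeta]$.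
   Context: $B_{\mathrm{Eucl}}(w,\rho)$ denotes the Euclidean disk in $\mathbb R^2$ of center $w$ and radius $\rho$. $|D^k\phi(z)|$ is the maximum of the absolute values of all $k$-th order partial derivatives of $\phi$ at $z$. *)

theory Defs
  imports "HOL-Analysis.Analysis"
begin

text \<open>Points of the plane are pairs \<open>(x,y) :: real \<times> real\<close>; the norm on
  \<open>real \<times> real\<close> is the Euclidean norm.\<close>

definition pdx :: "(real \<times> real \<Rightarrow> real) \<Rightarrow> real \<times> real \<Rightarrow> real" where
  "pdx f z = deriv (\<lambda>t. f (t, snd z)) (fst z)"

definition pdy :: "(real \<times> real \<Rightarrow> real) \<Rightarrow> real \<times> real \<Rightarrow> real" where
  "pdy f z = deriv (\<lambda>t. f (fst z, t)) (snd z)"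

text \<open>Iterated partial derivative: the list is read left to right,
  \<open>True\<close> = derivative in x, \<open>False\<close> = derivative in y.\<close>
fun pd :: "bool list \<Rightarrow> (real \<times> real \<Rightarrow> real) \<Rightarrow> real \<times> real \<Rightarrow> real" where
  "pd [] f = f"
| "pd (b # bs) f = pd bs (if b then pdx f else pdy f)"

text \<open>\<open>C^\<infinity>\<close>: every iterated partial derivative exists and is (Frechet)
  differentiable everywhere (hence all partials of all orders are continuous).\<close>
definition smooth2 :: "(real \<times> real \<Rightarrow> real) \<Rightarrow> bool" where
  "smooth2 f \<longleftrightarrow> (\<forall>ws. pd ws f differentiable_on UNIV)"

text \<open>\<open>|D^k f(z)|\<close>: maximum of the absolute values of all k-th order partials.\<close>
definition Dnorm :: "nat \<Rightarrow> (real \<times> real \<Rightarrow> real) \<Rightarrow> real \<times> real \<Rightarrow> real" where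
  "Dnorm k f z = Max {\<bar>pd ws f z\<bar> | ws. length ws = k}"

definition mat2_app :: "real \<Rightarrow> real \<Rightarrow> real \<Rightarrow> real \<Rightarrow> real \<times> real \<Rightarrow> real \<times> real" where
  "mat2_app a b c d w = (a * fst w + b * snd w, c * fst w + d * snd w)"

end

theory Submission
  imports Defs
begin


lemma pd_snoc: "pd (bs @ [b]) f = (if b then pdx (pd bs f) else pdy (pd bs f))"
  by (induction bs arbitrary: f) auto

lemma Dnorm_ge: "length ws = k \<Longrightarrow> \<bar>pd ws f z\<bar> \<le> Dnorm k f z"
proof -
  assume h: "length ws = k"
  have "{\<bar>pd ws f z\<bar> | ws. length ws = k} = (\<lambda>ws. \<bar>pd ws f z\<bar>) ` {ws. set ws \<subseteq> UNIV \<and> length ws = k}"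
    by auto
  moreover have "finite {ws::bool list. set ws \<subseteq> UNIV \<and> length ws = k}"
    by (rule finite_lists_length_eq) simp
  ultimately have "finite {\<bar>pd ws f z\<bar> | ws. length ws = k}" by simp
  then show ?thesis unfolding Dnorm_def using h by (intro Max_ge) auto
qed

lemma lin2:
  assumes "linear D"
  shows "D (v::real\<times>real) = fst v * D (1,0) + snd v * D (0,1)"
proof (cases v)
  case (Pair a b)
  have e: "(a,b) = a *\<^sub>R (1,0) + b *\<^sub>R (0,(1::real))" by simp
  have "D (a *\<^sub>R (1,0) + b *\<^sub>R (0,1)) = a * D (1,0) + b * D (0,1)"
    by (simp only: linear_add[OF assms] linear_scale[OF assms] real_scaleR_def)
  then show ?thesis using Pair by simp
qed

lemma pdx_eq:
  assumes "(g has_derivative D) (at p)"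
  shows "pdx g p = D (1,0)"
proof -
  have l: "linear D" using assms has_derivative_linear by blast
  have "((\<lambda>t. (t, snd p)) has_derivative (\<lambda>s. (s, 0))) (at (fst p))"
    by (auto intro!: derivative_eq_intros)
  note dd = this
  have "((g \<circ> (\<lambda>t. (t, snd p))) has_derivative (D \<circ> (\<lambda>s. (s, 0)))) (at (fst p))"
    using diff_chain_at[OF dd, of g D] assms by (simp add: prod.collapse)
  moreover have "D \<circ> (\<lambda>s. (s, 0)) = (*) (D (1,0))"
  proof
    fix s :: real show "(D \<circ> (\<lambda>s. (s, 0))) s = (*) (D (1,0)) s"
      using lin2[OF l, of "(s,0)"] by simp
  qed
  ultimately have "((\<lambda>t. g (t, snd p)) has_field_derivative D (1,0)) (at (fst p))"
    by (simp add: has_field_derivative_def o_def)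
  then show ?thesis unfolding pdx_def by (rule DERIV_imp_deriv)
qed

lemma pdy_eq:
  assumes "(g has_derivative D) (at p)"
  shows "pdy g p = D (0,1)"
proof -
  have l: "linear D" using assms has_derivative_linear by blast
  have "((\<lambda>t. (fst p, t)) has_derivative (\<lambda>s. (0, s))) (at (snd p))"
    by (auto intro!: derivative_eq_intros)
  note dd = this
  have "((g \<circ> (\<lambda>t. (fst p, t))) has_derivative (D \<circ> (\<lambda>s. (0, s)))) (at (snd p))"
    using diff_chain_at[OF dd, of g D] assms by (simp add: prod.collapse)
  moreover have "D \<circ> (\<lambda>s. (0, s)) = (*) (D (0,1))"
  proof
    fix s :: real show "(D \<circ> (\<lambda>s. (0, s))) s = (*) (D (0,1)) s"
      using lin2[OF l, of "(0,s)"] by simp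
  qed
  ultimately have "((\<lambda>t. g (fst p, t)) has_field_derivative D (0,1)) (at (snd p))"
    by (simp add: has_field_derivative_def o_def)
  then show ?thesis unfolding pdy_def by (rule DERIV_imp_deriv)
qed

lemma mvt2d:
  fixes g :: "real\<times>real \<Rightarrow> real"
  assumes dg: "g differentiable_on UNIV"
    and b: "\<And>p. p \<in> closed_segment z z' \<Longrightarrow> \<bar>pdx g p\<bar> \<le> K \<and> \<bar>pdy g p\<bar> \<le> K"
  shows "\<bar>g z' - g z\<bar> \<le> 2 * K * norm (z' - z)"
proof -
  define w where "w = z' - z"
  have ex: "\<And>p. \<exists>D. (g has_derivative D) (at p)"
    using dg unfolding differentiable_on_def differentiable_def by auto
  define Df where "Df p = (SOME D. (g has_derivative D) (at p))" for p
  have Df: "(g has_derivative Df p) (at p)" for p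
    using someI_ex[OF ex[of p]] unfolding Df_def by simp
  define h where "h t = g (z + t *\<^sub>R w)" for t
  have dh: "DERIV h t :> Df (z + t *\<^sub>R w) w" for t
  proof -
    have "((\<lambda>t. z + t *\<^sub>R w) has_derivative (\<lambda>s. s *\<^sub>R w)) (at t)"
      by (auto intro!: derivative_eq_intros)
    then have "((g \<circ> (\<lambda>t. z + t *\<^sub>R w)) has_derivative (Df (z + t *\<^sub>R w) \<circ> (\<lambda>s. s *\<^sub>R w))) (at t)"
      using diff_chain_at[of "\<lambda>t. z + t *\<^sub>R w" "\<lambda>s. s *\<^sub>R w" t g "Df (z + t *\<^sub>R w)"] Df[of "z + t *\<^sub>R w"] by simp
    moreover have "linear (Df (z + t *\<^sub>R w))" using Df has_derivative_linear by blast
    then have "Df (z + t *\<^sub>R w) \<circ> (\<lambda>s. s *\<^sub>R w) = (*) (Df (z + t *\<^sub>R w) w)"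
      by (auto simp: fun_eq_iff linear_scale)
    ultimately show ?thesis
      unfolding h_def[abs_def] by (simp add: has_field_derivative_def o_def)
  qed
  have bd: "\<bar>Df (z + t *\<^sub>R w) w\<bar> \<le> 2 * K * norm w" if "0 \<le> t" "t \<le> 1" for t
  proof -
    define p where "p = z + t *\<^sub>R w"
    have "p = (1 - t) *\<^sub>R z + t *\<^sub>R z'"
      unfolding p_def w_def by (simp add: algebra_simps)
    then have "p \<in> closed_segment z z'"
      using that unfolding closed_segment_def by blast
    then have kb: "\<bar>pdx g p\<bar> \<le> K" "\<bar>pdy g p\<bar> \<le> K" using b by auto
    have l: "linear (Df p)" using has_derivative_linear[OF Df[of p]] .
    have "Df p w = fst w * pdx g p + snd w * pdy g p"
      using lin2[OF l, of w] pdx_eq[OF Df[of p]] pdy_eq[OF Df[of p]] by simp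
    also have "\<bar>\<dots>\<bar> \<le> \<bar>fst w\<bar> * K + \<bar>snd w\<bar> * K"
    proof -
      have "\<bar>fst w * pdx g p\<bar> \<le> \<bar>fst w\<bar> * K"
        unfolding abs_mult by (rule mult_left_mono[OF kb(1)]) simp
      moreover have "\<bar>snd w * pdy g p\<bar> \<le> \<bar>snd w\<bar> * K"
        unfolding abs_mult by (rule mult_left_mono[OF kb(2)]) simp
      ultimately show ?thesis by linarith
    qed
    also have "\<dots> \<le> norm w * K + norm w * K"
    proof -
      have K: "0 \<le> K" using kb by linarith
      have "\<bar>fst w\<bar> \<le> norm w" "\<bar>snd w\<bar> \<le> norm w"
        using norm_fst_le[of "fst w" "snd w"] norm_snd_le[of "snd w" "fst w"] by auto
      then show ?thesis using K by (intro add_mono mult_right_mono) auto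
    qed
    finally show ?thesis unfolding p_def by simp
  qed
  have "\<exists>s. 0 < s \<and> s < 1 \<and> h 1 - h 0 = (1 - 0) * Df (z + s *\<^sub>R w) w"
    by (rule MVT2) (use dh in auto)
  then obtain s where s: "0 < s" "s < 1" "h 1 - h 0 = Df (z + s *\<^sub>R w) w" by auto
  have "g z' - g z = h 1 - h 0" unfolding h_def w_def by simp
  then show ?thesis using s bd[of s] w_def by simp
qed


lemma key_ineq:
  fixes \<alpha> \<beta> e1 e2 r N B \<epsilon> :: real
  assumes "N / 2 \<le> \<bar>\<beta>\<bar>" "\<bar>\<alpha>\<bar> \<le> B * N" "\<bar>\<beta>\<bar> \<le> B * N"
    "\<bar>e1\<bar> \<le> \<epsilon> * r" "\<bar>e2\<bar> \<le> \<epsilon> * r" "16 * B * \<epsilon> \<le> 1" "0 < r" "0 \<le> N" "0 \<le> \<epsilon>"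
  shows "N * r / 8 \<le> \<bar>\<alpha> * e1 + \<beta> * (r/2 + e2)\<bar>"
proof -
  have B: "0 \<le> B * N" using assms(2) by linarith
  have "\<bar>\<alpha> * e1\<bar> \<le> (B * N) * (\<epsilon> * r)" unfolding abs_mult
    using assms by (intro mult_mono) auto
  moreover have "\<bar>\<beta> * e2\<bar> \<le> (B * N) * (\<epsilon> * r)" unfolding abs_mult
    using assms by (intro mult_mono) auto
  moreover have "(B * N) * (\<epsilon> * r) = (B * \<epsilon>) * (N * r)" by simp
  moreover have "(B * \<epsilon>) * (N * r) \<le> (1/16) * (N * r)"
    using assms by (intro mult_right_mono) auto
  moreover have "\<bar>\<beta> * (r/2)\<bar> \<ge> (N/2) * (r/2)" unfolding abs_mult
    using assms by (intro mult_mono) auto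
  moreover have "\<alpha> * e1 + \<beta> * (r/2 + e2) = \<beta> * (r/2) + (\<alpha> * e1 + \<beta> * e2)"
    by (simp add: algebra_simps)
  moreover have "N / 2 * (r / 2) = (N * r) / 4" by simp
  moreover have "\<bar>\<alpha> * e1 + \<beta> * e2\<bar> \<le> \<bar>\<alpha> * e1\<bar> + \<bar>\<beta> * e2\<bar>" by (rule abs_triangle_ineq)
  moreover have "\<bar>\<beta> * (r/2)\<bar> \<le> \<bar>\<beta> * (r/2) + (\<alpha> * e1 + \<beta> * e2)\<bar> + \<bar>\<alpha> * e1 + \<beta> * e2\<bar>"
    by linarith
  ultimately show ?thesis by linarith
qed



lemma abs_fst_le: "\<bar>fst p\<bar> \<le> norm (p::real\<times>real)"
  by (metis norm_fst_le prod.collapse real_norm_def)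
lemma abs_snd_le: "\<bar>snd p\<bar> \<le> norm (p::real\<times>real)"
  by (metis norm_snd_le prod.collapse real_norm_def)

lemma zpart:
  fixes \<phi> :: "real \<times> real \<Rightarrow> real" and m :: nat and C :: real and z :: "real \<times> real"
  assumes m1: "m \<ge> 1"
    and sm: "smooth2 \<phi>"
    and Cp: "C > 0"
    and D3: "\<forall>z. Dnorm 3 \<phi> z \<le> C * norm z ^ (2*m - 1)"
    and D2: "\<forall>z. Dnorm 2 \<phi> z \<le> C * norm z ^ (2*m)"
    and K2_def: "K2 = C * 4^m" and B_def: "B = K2 + 2 * real m + 1"
    and e0_def: "e0 = 1 / (2 * K2 + 2)" and e2_def: "e2 = 1 / (16 * B + 4)"
    and z0: "z \<noteq> 0"
  shows "\<exists>u::real \<times> real. norm u = 1 \<and>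
        (\<forall>r. 0 < r \<and> r < e0 * norm z \<longrightarrow>
          ball (z + (r/2) *\<^sub>R u) (e2 * r) \<subseteq> ball z r \<and>
          (\<forall>\<zeta> \<in> ball (z + (r/2) *\<^sub>R u) (e2 * r).
            \<forall>z' \<in> closed_segment z \<zeta>. \<forall>z'' \<in> closed_segment z \<zeta>.
              norm (mat2_app
                 (pd [True, True] \<phi> z' - 2 * real m * norm z ^ (2*m - 2) * fst z * snd z)
                 (pd [True, False] \<phi> z' - norm z ^ (2*m - 2) * (norm z ^ 2 + 2 * real m * (snd z)^2))
                 (pd [True, False] \<phi> z'' + norm z ^ (2*m - 2) * (norm z ^ 2 + 2 * real m * (fst z)^2))
                 (pd [False, False] \<phi> z'' + 2 * real m * norm z ^ (2*m - 2) * fst z * snd z)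
                 (\<zeta> - z))
              \<ge> inverse 8 * norm z ^ (2*m) * r))"
proof -
  define nz where "nz = norm z"
  define N where "N = nz ^ (2*m)"
  define P where "P = nz ^ (2*m - 2)"
  have nz: "nz > 0" using z0 nz_def by simp
  have N: "N > 0" using nz N_def by simp
  have P: "P \<ge> 0" using nz P_def by simp
  have PN: "P * nz^2 = N"
  proof -
    have "2*m - 2 + 2 = 2*m" using m1 by simp
    then show ?thesis unfolding P_def N_def by (metis power_add)
  qed
  have xy: "(fst z)^2 + (snd z)^2 = nz^2"
    unfolding nz_def by (cases z) (simp add: norm_Pair)
  have ax: "(fst z)^2 \<le> nz^2" "(snd z)^2 \<le> nz^2"
    using xy zero_le_power2[of "fst z"] zero_le_power2[of "snd z"] by linarith+
  have axy: "\<bar>fst z * snd z\<bar> \<le> nz^2"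
  proof -
    have "\<bar>fst z\<bar> \<le> nz" "\<bar>snd z\<bar> \<le> nz" using abs_fst_le abs_snd_le nz_def by auto
    then have "\<bar>fst z\<bar> * \<bar>snd z\<bar> \<le> nz * nz" by (intro mult_mono) auto
    then show ?thesis by (simp add: abs_mult power2_eq_square)
  qed
  define T1 where "T1 = 2 * real m * P * fst z * snd z"
  define T2 where "T2 = P * (nz ^ 2 + 2 * real m * (snd z)^2)"
  define T3 where "T3 = P * (nz ^ 2 + 2 * real m * (fst z)^2)"
  have T1b: "\<bar>T1\<bar> \<le> 2 * real m * N"
  proof -
    have "\<bar>T1\<bar> = (2 * real m) * (P * \<bar>fst z * snd z\<bar>)" unfolding T1_def using P
      by (simp add: abs_mult)
    also have "\<dots> \<le> (2 * real m) * (P * nz^2)" using axy P by (intro mult_left_mono) auto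
    finally show ?thesis using PN by simp
  qed
  have T2e: "T2 = N + 2 * real m * (P * (snd z)^2)" unfolding T2_def using PN by (simp add: algebra_simps)
  have "P * (snd z)^2 \<le> N" using PN P ax by (metis mult_left_mono)
  then have "2 * real m * (P * (snd z)^2) \<le> 2 * real m * N" by (intro mult_left_mono) auto
  then have T2b: "\<bar>T2\<bar> \<le> (1 + 2 * real m) * N" using T2e P N by (simp add: algebra_simps)
  have T2N: "N \<le> T2" using T2e P by simp
  have T3e: "T3 = N + 2 * real m * (P * (fst z)^2)" unfolding T3_def using PN by (simp add: algebra_simps)
  have "P * (fst z)^2 \<le> N" using PN P ax by (metis mult_left_mono)
  then have "2 * real m * (P * (fst z)^2) \<le> 2 * real m * N" by (intro mult_left_mono) auto
  then have T3b: "\<bar>T3\<bar> \<le> (1 + 2 * real m) * N" using T3e P N by (simp add: algebra_simps)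
  have T3N: "N \<le> T3" using T3e P by simp
  have K2p: "K2 > 0" unfolding K2_def using Cp by simp
  have Bp: "B > 0" unfolding B_def using K2p by simp
  have e0p: "0 < e0" unfolding e0_def using K2p by simp
  have e0h: "e0 \<le> 1/2" unfolding e0_def using K2p by (simp add: field_simps)
  have K2e0: "K2 * e0 \<le> 1/2" unfolding e0_def using K2p by (simp add: field_simps)
  have e2p: "0 < e2" unfolding e2_def using Bp by simp
  have e2h: "e2 < 1/2" unfolding e2_def using Bp by (simp add: field_simps)
  have Be2: "16 * B * e2 \<le> 1" unfolding e2_def using Bp by (simp add: field_simps)
  have pw2: "(2*nz)^(2*m) = 4^m * N" unfolding N_def by (simp add: power_mult_distrib power_mult)
  have pw3: "2 * (2*nz)^(2*m-1) * nz = 4^m * N"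
  proof -
    have "2*m = Suc (2*m-1)" using m1 by simp
    then have "(2*nz)^(2*m) = (2*nz) * (2*nz)^(2*m-1)" by (metis power_Suc)
    then show ?thesis using pw2 by (simp add: algebra_simps)
  qed
  have d2: "\<bar>pd ws \<phi> p\<bar> \<le> K2 * N" if "norm p \<le> 2*nz" "length ws = 2" for p ws
  proof -
    have "\<bar>pd ws \<phi> p\<bar> \<le> Dnorm 2 \<phi> p" by (rule Dnorm_ge) fact
    also have "\<dots> \<le> C * norm p^(2*m)" using D2 by blast
    also have "\<dots> \<le> C * (2*nz)^(2*m)" using Cp that by (intro mult_left_mono power_mono) auto
    finally show ?thesis unfolding K2_def pw2 by (simp add: mult.assoc)
  qed
  have d3: "\<bar>pd ws \<phi> p\<bar> \<le> C * (2*nz)^(2*m-1)" if "norm p \<le> 2*nz" "length ws = 3" for p ws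
  proof -
    have "\<bar>pd ws \<phi> p\<bar> \<le> Dnorm 3 \<phi> p" by (rule Dnorm_ge) fact
    also have "\<dots> \<le> C * norm p^(2*m-1)" using D3 by blast
    also have "\<dots> \<le> C * (2*nz)^(2*m-1)" using Cp that by (intro mult_left_mono power_mono) auto
    finally show ?thesis .
  qed
  define gxy where "gxy = pd [True, False] \<phi>"
  define b0 where "b0 = gxy z - T2"
  define c0 where "c0 = gxy z + T3"
  have bc: "N \<le> \<bar>b0\<bar> \<or> N \<le> \<bar>c0\<bar>" using T2N T3N unfolding b0_def c0_def by linarith
  define u :: "real \<times> real" where "u = (if N \<le> \<bar>b0\<bar> then (0,1) else (1,0))"
  have nu: "norm u = 1" by (simp add: u_def)
  show ?thesis
    unfolding nz_def[symmetric] P_def[symmetric] N_def[symmetric] gxy_def[symmetric]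
      T1_def[symmetric] T2_def[symmetric] T3_def[symmetric]
  proof (rule exI[of _ u], intro conjI allI impI ballI)
    show "norm u = 1" by (simp add: u_def)
  next
    fix r assume r: "0 < r \<and> r < e0 * nz"
    then have r0: "0 < r" and rz: "r \<le> e0 * nz" by auto
    have rz2: "r \<le> nz / 2" using rz e0h nz by (metis mult_right_mono less_imp_le order_trans times_divide_eq_left mult_1)
    show "ball (z + (r/2) *\<^sub>R u) (e2 * r) \<subseteq> ball z r"
    proof
      fix \<zeta> assume "\<zeta> \<in> ball (z + (r/2) *\<^sub>R u) (e2 * r)"
      then have "dist (z + (r/2) *\<^sub>R u) \<zeta> < e2 * r" by simp
      moreover have "dist z (z + (r/2) *\<^sub>R u) = r/2" using r0 by (simp add: dist_norm u_def)
      moreover have "e2 * r < r / 2" using e2h r0 by simp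
      ultimately show "\<zeta> \<in> ball z r" using dist_triangle[of z \<zeta> "z + (r/2) *\<^sub>R u"] by simp
    qed
  next
    fix r \<zeta> z' z'' assume r: "0 < r \<and> r < e0 * nz"
    then have r0: "0 < r" and rz: "r \<le> e0 * nz" by auto
    have rz2: "r \<le> nz / 2" using rz e0h nz by (metis mult_right_mono less_imp_le order_trans times_divide_eq_left mult_1)
    assume \<zeta>: "\<zeta> \<in> ball (z + (r/2) *\<^sub>R u) (e2 * r)"
      and z': "z' \<in> closed_segment z \<zeta>" and z'': "z'' \<in> closed_segment z \<zeta>"
    define w where "w = \<zeta> - z"
    define e where "e = w - (r/2) *\<^sub>R u"
    have ne: "norm e < e2 * r" using \<zeta> unfolding e_def w_def
      by (simp add: dist_norm norm_minus_commute algebra_simps)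
    have fe: "\<bar>fst e\<bar> \<le> e2 * r" "\<bar>snd e\<bar> \<le> e2 * r" using ne abs_fst_le[of e] abs_snd_le[of e] by auto
    have nw: "norm w \<le> r"
    proof -
      have "w = e + (r/2) *\<^sub>R u" unfolding e_def by simp
      then have "norm w \<le> norm e + r/2" using r0 norm_triangle_ineq[of e "(r/2) *\<^sub>R u"] nu
        by simp
      moreover have "e2 * r < r / 2" using e2h r0 by simp
      ultimately show ?thesis using ne by simp
    qed
    have seg: "norm p \<le> 2 * nz \<and> norm (p - z) \<le> r" if "p \<in> closed_segment z \<zeta>" for p
    proof -
      have "dist p z \<le> dist z \<zeta>" using dist_in_closed_segment[OF that] by simp
      then have "norm (p - z) \<le> r" using nw by (simp add: dist_norm w_def norm_minus_commute)
      moreover have "norm p \<le> norm z + norm (p - z)" using norm_triangle_ineq[of z "p - z"] by simp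
      ultimately show ?thesis using rz2 nz_def norm_ge_zero[of z] by linarith
    qed
    have del: "\<bar>gxy p - gxy z\<bar> \<le> N / 2" if "p \<in> closed_segment z \<zeta>" for p
    proof -
      have dg: "gxy differentiable_on UNIV" using sm unfolding smooth2_def gxy_def by blast
      have "\<bar>gxy p - gxy z\<bar> \<le> 2 * (C * (2*nz)^(2*m-1)) * norm (p - z)"
      proof (rule mvt2d[OF dg])
        fix q assume q: "q \<in> closed_segment z p"
        have "closed_segment z p \<subseteq> closed_segment z \<zeta>"
          using that by (simp add: subset_closed_segment)
        then have nq: "norm q \<le> 2 * nz" using seg q by blast
        have "pdx gxy q = pd [True, False, True] \<phi> q" "pdy gxy q = pd [True, False, False] \<phi> q"
          unfolding gxy_def using pd_snoc[of "[True, False]" True \<phi>] pd_snoc[of "[True, False]" False \<phi>]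
          by simp_all
        then show "\<bar>pdx gxy q\<bar> \<le> C * (2*nz)^(2*m-1) \<and> \<bar>pdy gxy q\<bar> \<le> C * (2*nz)^(2*m-1)"
          using d3[OF nq, of "[True, False, True]"] d3[OF nq, of "[True, False, False]"] by simp
      qed
      also have "\<dots> \<le> 2 * (C * (2*nz)^(2*m-1)) * (e0 * nz)"
        using seg[OF that] rz Cp nz by (intro mult_left_mono) auto
      also have "\<dots> = (C * 4^m) * e0 * N" using pw3 by (simp add: algebra_simps)
      also have "\<dots> = (K2 * e0) * N" unfolding K2_def by simp
      also have "\<dots> \<le> (1/2) * N" using K2e0 N by (intro mult_right_mono) auto
      finally show ?thesis by simp
    qed
    have nz2: "norm z' \<le> 2 * nz" "norm z'' \<le> 2 * nz" using seg z' z'' by auto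
    have len: "length [True,True] = 2" "length [True,False] = 2" "length [False,False] = 2" by simp_all
    have BN: "B * N = K2 * N + 2 * real m * N + N" "(1 + 2 * real m) * N = 2 * real m * N + N"
      by (simp_all add: B_def algebra_simps)
    show "inverse 8 * N * r \<le> norm (mat2_app (pd [True, True] \<phi> z' - T1) (gxy z' - T2)
                 (gxy z'' + T3) (pd [False, False] \<phi> z'' + T1) (\<zeta> - z))"
    proof (cases "N \<le> \<bar>b0\<bar>")
      case True
      then have u: "u = (0,1)" by (simp add: u_def)
      have wfs: "fst w = fst e" "snd w = r/2 + snd e" unfolding e_def u by auto
      have a1: "\<bar>pd [True, True] \<phi> z' - T1\<bar> \<le> B * N"
        using d2[OF nz2(1) len(1)] T1b BN N abs_triangle_ineq4[of "pd [True, True] \<phi> z'" T1] by linarith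
      have a2: "\<bar>gxy z' - T2\<bar> \<le> B * N"
        using d2[OF nz2(1) len(2)] T2b BN N abs_triangle_ineq4[of "gxy z'" T2] unfolding gxy_def by linarith
      have a3: "N / 2 \<le> \<bar>gxy z' - T2\<bar>" using del[OF z'] True unfolding b0_def by linarith
      have k: "N * r / 8 \<le> \<bar>(pd [True, True] \<phi> z' - T1) * fst e + (gxy z' - T2) * (r/2 + snd e)\<bar>"
        by (rule key_ineq[OF a3 a1 a2 fe(1) fe(2) Be2 r0]) (use N e2p in auto)
      show ?thesis using k abs_fst_le[of "mat2_app (pd [True, True] \<phi> z' - T1) (gxy z' - T2)
                 (gxy z'' + T3) (pd [False, False] \<phi> z'' + T1) (\<zeta> - z)"]
        unfolding mat2_app_def w_def[symmetric] wfs by (simp add: field_simps)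
    next
      case False
      then have c: "N \<le> \<bar>c0\<bar>" using bc by simp
      have u: "u = (1,0)" using False by (simp add: u_def)
      have wfs: "fst w = r/2 + fst e" "snd w = snd e" unfolding e_def u by auto
      have a1: "\<bar>pd [False, False] \<phi> z'' + T1\<bar> \<le> B * N"
        using d2[OF nz2(2) len(3)] T1b BN N abs_triangle_ineq[of "pd [False, False] \<phi> z''" T1] by linarith
      have a2: "\<bar>gxy z'' + T3\<bar> \<le> B * N"
        using d2[OF nz2(2) len(2)] T3b BN N abs_triangle_ineq[of "gxy z''" T3] unfolding gxy_def by linarith
      have a3: "N / 2 \<le> \<bar>gxy z'' + T3\<bar>" using del[OF z''] c unfolding c0_def by linarith
      have k: "N * r / 8 \<le> \<bar>(pd [False, False] \<phi> z'' + T1) * snd e + (gxy z'' + T3) * (r/2 + fst e)\<bar>"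
        by (rule key_ineq[OF a3 a1 a2 fe(2) fe(1) Be2 r0]) (use N e2p in auto)
      show ?thesis using k abs_snd_le[of "mat2_app (pd [True, True] \<phi> z' - T1) (gxy z' - T2)
                 (gxy z'' + T3) (pd [False, False] \<phi> z'' + T1) (\<zeta> - z)"]
        unfolding mat2_app_def w_def[symmetric] wfs by (simp add: field_simps)
    qed
  qed
qed


theorem proposition3p5:
  fixes \<phi> :: "real \<times> real \<Rightarrow> real" and m :: nat and C :: real
  assumes "m \<ge> 1"
    and "smooth2 \<phi>"
    and "C > 0"
    and "\<forall>z. Dnorm 3 \<phi> z \<le> C * norm z ^ (2*m - 1)"
    and "\<forall>z. Dnorm 2 \<phi> z \<le> C * norm z ^ (2*m)"
    and "\<forall>z. Dnorm 1 \<phi> z \<le> C * norm z ^ (2*m + 1)"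
  shows "\<exists>C2 \<epsilon>0 \<epsilon>2. C2 > 1 \<and> 0 < \<epsilon>0 \<and> \<epsilon>0 < 1 \<and> 0 < \<epsilon>2 \<and> \<epsilon>2 < 1 \<and>
    (\<forall>z::real \<times> real. z \<noteq> 0 \<longrightarrow>
      (\<exists>u::real \<times> real. norm u = 1 \<and>
        (\<forall>r. 0 < r \<and> r < \<epsilon>0 * norm z \<longrightarrow>
          ball (z + (r/2) *\<^sub>R u) (\<epsilon>2 * r) \<subseteq> ball z r \<and>
          (\<forall>\<zeta> \<in> ball (z + (r/2) *\<^sub>R u) (\<epsilon>2 * r).
            \<forall>z' \<in> closed_segment z \<zeta>. \<forall>z'' \<in> closed_segment z \<zeta>.
              norm (mat2_app
                 (pd [True, True] \<phi> z' - 2 * real m * norm z ^ (2*m - 2) * fst z * snd z)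
                 (pd [True, False] \<phi> z' - norm z ^ (2*m - 2) * (norm z ^ 2 + 2 * real m * (snd z)^2))
                 (pd [True, False] \<phi> z'' + norm z ^ (2*m - 2) * (norm z ^ 2 + 2 * real m * (fst z)^2))
                 (pd [False, False] \<phi> z'' + 2 * real m * norm z ^ (2*m - 2) * fst z * snd z)
                 (\<zeta> - z))
              \<ge> inverse C2 * norm z ^ (2*m) * r))))"
  proof -
  define K2 where "K2 = C * 4^m"
  define B where "B = K2 + 2 * real m + 1"
  define e0 where "e0 = 1 / (2 * K2 + 2)"
  define e2 where "e2 = 1 / (16 * B + 4)"
  have K2p: "K2 > 0" unfolding K2_def using assms(3) by simp
  have Bp: "B > 0" unfolding B_def using K2p by simp
  have e0: "0 < e0" "e0 < 1" unfolding e0_def using K2p by (simp_all add: field_simps)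
  have e2: "0 < e2" "e2 < 1" unfolding e2_def using Bp by (simp_all add: field_simps)
  note Z = zpart[OF assms(1,2,3,4,5) K2_def B_def e0_def e2_def]
  show ?thesis
    apply (rule exI[of _ 8], rule exI[of _ e0], rule exI[of _ e2])
    using e0 e2 Z by simp
qed

end
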